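(* Let $(G;+)$ be a commutative groupoid, let $n \geq 4$, and let $M, M'$ be multisets of cardinality $n$ over $G$. Assume that $N_M(x) = N_{M'}(x)$ for all $x \in G$ and that there exists $y \in G$ such that $N_M(y)$ is not a multiple of $\binom{n-1}{2}$. Then there exist $a, b \in G$ such that $M' = M \setminus \langle a\rangle \uplus \langle b\rangle$.
   Context: A (finite) multiset $M$ over a set $X$ is a function $\mathbf{1}_M \colon X \to \mathbb{N}$ with finite support; $\mathbf{1}_M(x)$ is the multiplicity of $x$, and $|M| = \sum_x \mathbf{1}_M(x)$ is its cardinality. Multiset sum $\uplus$ adds multiplicities; the difference $M \setminus M'$ has multiplicities $\max(\mathbf{1}_M(x)-\mathbf{1}_{M'}(x),0)$. $\langle x_1,\dots,x_k\rangle$ denotes the multiset in which each element occurs as often as it appears in the list. $[n]=\{1,\dots,n\}$ and $\binom{[n]}{2}$ is the set of 2-element subsets of $[n]$. A commutative groupoid is a set $G$ with a commutative binary operation $+$ (not necessarily associative). Cards: for a multiset $M$ of cardinality $n \geq 2$ over $G$, fix $(m_1,\dots,m_n) \in G^n$ with $M = \langle m_1,\dots,m_n\rangle$; for $I = \{i,j\} \in \binom{[n]}{2}$ with $i<j$, the card $M_I$ is $M \setminus \langle m_i, m_j\rangle \uplus \langle m_i + m_j\rangle$. $N_M(x)$ denotes the multiplicity of $x$ in the multiset sum $\biguplus_{I \in \binom{[n]}{2}} M_I$ of all cards of $M$. *)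

theory Defs
  imports Main "HOL-Library.Multiset"
begin

definition comm_groupoid :: "('a \<Rightarrow> 'a \<Rightarrow> 'a) \<Rightarrow> bool" where
  "comm_groupoid f \<longleftrightarrow> (\<forall>x y. f x y = f y x)"

text \<open>Card of a list-enumerated multiset (indices 0-based, i < j < length xs):
  M minus <m_i, m_j> plus <m_i + m_j>.\<close>
definition card_of :: "('a \<Rightarrow> 'a \<Rightarrow> 'a) \<Rightarrow> 'a list \<Rightarrow> nat \<Rightarrow> nat \<Rightarrow> 'a multiset" where
  "card_of f xs i j = (mset xs - {#xs ! i, xs ! j#}) + {# f (xs ! i) (xs ! j) #}"

definition deck_sum :: "('a \<Rightarrow> 'a \<Rightarrow> 'a) \<Rightarrow> 'a multiset \<Rightarrow> 'a multiset" where
  "deck_sum f M = (let xs = (SOME xs. mset xs = M) in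
     (\<Sum>p \<in> {(i, j). i < j \<and> j < length xs}. card_of f xs (fst p) (snd p)))"

definition N :: "('a \<Rightarrow> 'a \<Rightarrow> 'a) \<Rightarrow> 'a multiset \<Rightarrow> 'a \<Rightarrow> nat" where
  "N f M x = count (deck_sum f M) x"

end

theory Submission
  imports Defs
begin

lemma choose_Suc2: "(Suc k choose 2) = (k choose 2) + k"
  by (simp add: numeral_2_eq_2)

lemma choose2: "(k choose 2) * 2 = k * (k - 1::nat)"
proof (induction k)
  case 0 then show ?case by simp
next
  case (Suc k) then show ?case by (cases k) (simp_all add: choose_Suc2 algebra_simps)
qed

lemma choose_pred: "(n choose 2) = ((n - 1) choose 2) + (n - 1)"
  by (cases n) (simp_all add: choose_Suc2)

lemma numineq: "4 \<le> (n::nat) \<Longrightarrow> n choose 2 \<le> 2 * ((n-1) choose 2)"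
proof -
  assume "4 \<le> n"
  then obtain m where m: "n = m + 4" by (metis add.commute le_Suc_ex)
  have "(n choose 2) * 2 = (m+4)*(m+3)" using choose2[of n] m by simp
  moreover have "((n-1) choose 2) * 2 = (m+3)*(m+2)" using choose2[of "n-1"] m by simp
  moreover have "(m+4)*(m+3) \<le> 2 * ((m+3)*(m+2))" by (simp add: algebra_simps)
  ultimately show ?thesis by linarith
qed

lemma count_mset_sum: "count (mset xs) x = (\<Sum>k<length xs. if xs!k = x then 1 else 0)"
proof (induction xs rule: rev_induct)
  case Nil then show ?case by simp
next
  case (snoc a xs)
  have "(\<Sum>k<length (xs@[a]). if (xs@[a])!k = x then 1 else (0::nat))
       = (\<Sum>k<length xs. if (xs@[a])!k = x then 1 else 0) + (if a = x then 1 else 0)"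
    by simp
  also have "(\<Sum>k<length xs. if (xs@[a])!k = x then 1 else (0::nat)) = (\<Sum>k<length xs. if xs!k = x then 1 else 0)"
    by (rule sum.cong) (auto simp: nth_append)
  finally show ?case using snoc by simp
qed

lemma pair_sum:
  fixes g :: "nat \<Rightarrow> nat"
  shows "(\<Sum>p\<in>{(i,j). i<j \<and> j<n}. g (fst p) + g (snd p)) = (n-1) * (\<Sum>k<n. g k)"
proof (induction n)
  case 0 then show ?case by simp
next
  case (Suc n)
  have eq: "{(i,j). i<j \<and> j<Suc n} = {(i,j). i<j \<and> j<n} \<union> (\<lambda>i. (i,n)) ` {..<n}" by auto
  have fin: "finite {(i,j). i<j \<and> j<(n::nat)}"
    by (rule finite_subset[of _ "{..<n} \<times> {..<n}"]) auto
  have disj: "{(i,j). i<j \<and> j<n} \<inter> (\<lambda>i. (i,n)) ` {..<n} = {}" by auto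
  have "(\<Sum>p\<in>{(i,j). i<j \<and> j<Suc n}. g (fst p) + g (snd p)) = (\<Sum>p\<in>{(i,j). i<j \<and> j<n}. g (fst p) + g (snd p)) + (\<Sum>p\<in>(\<lambda>i. (i,n)) ` {..<n}. g (fst p) + g (snd p))"
    unfolding eq by (rule sum.union_disjoint) (use fin disj in auto)
  also have "(\<Sum>p\<in>(\<lambda>i. (i,n)) ` {..<n}. g (fst p) + g (snd p)) = (\<Sum>i<n. g i + g n)"
    by (subst sum.reindex) (auto simp: inj_on_def)
  also have "\<dots> = (\<Sum>i<n. g i) + n * g n" by (simp add: sum.distrib)
  finally show ?case using Suc.IH by (cases n) (simp_all add: algebra_simps)
qed

lemma size_sum_single: "finite S \<Longrightarrow> size (\<Sum>p\<in>S. {#s p#}) = card S"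
  by (induction S rule: finite_induct) auto

lemma deck:
  assumes "size M = n"
  shows "\<exists>Q. size Q = n choose 2 \<and> (\<forall>x. N f M x = ((n-1) choose 2) * count M x + count Q x)"
proof -
  define xs where "xs = (SOME xs. mset xs = M)"
  have xs: "mset xs = M" unfolding xs_def by (rule someI_ex) (rule ex_mset)
  have len: "length xs = n" using xs assms by (metis size_mset)
  define S where "S = {(i,j). i<j \<and> j<n}"
  have finS: "finite S" unfolding S_def
    by (rule finite_subset[of _ "{..<n} \<times> {..<n}"]) auto
  define s where "s p = f (xs ! fst p) (xs ! snd p)" for p
  define Q where "Q = (\<Sum>p\<in>S. {#s p#})"
  have cardS2: "card S * 2 = n * (n-1)" using pair_sum[of "\<lambda>_. 1" n] by (simp add: S_def algebra_simps)
  have cardS: "card S = ((n-1) choose 2) + (n-1)"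
    using cardS2 choose2[of n] choose_pred[of n] by simp
  have sizeQ: "size Q = n choose 2" unfolding Q_def using size_sum_single[OF finS] cardS choose_pred[of n]
    by simp
  show ?thesis
  proof (intro exI conjI allI)
    show "size Q = n choose 2" by (rule sizeQ)
    fix x
    define g where "g k = (if xs!k = x then 1 else 0::nat)" for k
    define c where "c = count M x"
    have c: "c = (\<Sum>k<n. g k)" using count_mset_sum[of xs x] xs len by (simp add: c_def g_def)
    have le: "g (fst p) + g (snd p) \<le> c" if "p \<in> S" for p
    proof -
      obtain i j where p: "p = (i,j)" by (cases p)
      have "i \<noteq> j" "i < n" "j < n" using that p S_def by auto
      then have "g i + g j = (\<Sum>k\<in>{i,j}. g k)" by simp
      also have "\<dots> \<le> (\<Sum>k<n. g k)" by (rule sum_mono2) (use \<open>i<n\<close> \<open>j<n\<close> in auto)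
      finally show ?thesis using c p by simp
    qed
    have cardp: "count (card_of f xs i j) x = c - (g i + g j) + (if s (i,j) = x then 1 else 0)" for i j
      by (auto simp: card_of_def s_def g_def c_def xs)
    have "N f M x = (\<Sum>p\<in>S. count (card_of f xs (fst p) (snd p)) x)"
      unfolding N_def deck_sum_def Let_def xs_def[symmetric] S_def len count_sum by simp
    also have "\<dots> = (\<Sum>p\<in>S. (c - (g (fst p) + g (snd p))) + (if s p = x then 1 else 0))"
      by (rule sum.cong) (auto simp: cardp)
    also have "\<dots> = (\<Sum>p\<in>S. c - (g (fst p) + g (snd p))) + count Q x"
    proof -
      have "count Q x = (\<Sum>p\<in>S. if s p = x then 1 else 0)"
        unfolding Q_def count_sum by (rule sum.cong) auto
      then show ?thesis by (simp add: sum.distrib)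
    qed
    finally have N1: "N f M x = (\<Sum>p\<in>S. c - (g (fst p) + g (snd p))) + count Q x" .
    have "(\<Sum>p\<in>S. c - (g (fst p) + g (snd p))) + (\<Sum>p\<in>S. g (fst p) + g (snd p))
          = (\<Sum>p\<in>S. c)"
      by (subst sum.distrib[symmetric]) (rule sum.cong, auto dest: le)
    also have "\<dots> = card S * c" by simp
    finally have A: "(\<Sum>p\<in>S. c - (g (fst p) + g (snd p))) + (n-1) * c = card S * c"
      using pair_sum[of g n] c by (simp add: S_def)
    have "(\<Sum>p\<in>S. c - (g (fst p) + g (snd p))) = ((n-1) choose 2) * c"
      using A cardS by (simp add: algebra_simps)
    then show "N f M x = ((n-1) choose 2) * count M x + count Q x"
      using N1 c_def by simp
  qed
qed

theorem mainTheorem2: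
  fixes f :: "'a \<Rightarrow> 'a \<Rightarrow> 'a" and M M' :: "'a multiset" and n :: nat
  assumes "comm_groupoid f"
    and "n \<ge> 4"
    and "size M = n" and "size M' = n"
    and "\<forall>x. N f M x = N f M' x"
    and "\<exists>y. \<not> ((n - 1) choose 2) dvd N f M y"
  shows "\<exists>a b. M' = (M - {#a#}) + {#b#}"
proof -
  define C where "C = (n - 1) choose 2"
  obtain Q where Q: "size Q = n choose 2" "\<forall>x. N f M x = C * count M x + count Q x"
    using deck[OF assms(3)] C_def by blast
  obtain Q' where Q': "size Q' = n choose 2" "\<forall>x. N f M' x = C * count M' x + count Q' x"
    using deck[OF assms(4)] C_def by blast
  have eqs: "C * count M x + count Q x = C * count M' x + count Q' x" for x
    using Q(2) Q'(2) assms(5) by metis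
  define A where "A = M - M'"
  define B where "B = M' - M"
  have "M - M' = M - (M \<inter># M')" by (simp add: multiset_eq_iff)
  then have sA: "size A = size M - size (M \<inter># M')"
    unfolding A_def using size_Diff_submset[of "M \<inter># M'" M] by simp
  have "M' - M = M' - (M \<inter># M')" by (auto simp: multiset_eq_iff)
  then have sB: "size B = size M' - size (M \<inter># M')"
    unfolding B_def using size_Diff_submset[of "M \<inter># M'" M'] by simp
  have sAB: "size A = size B" using sA sB assms(3,4) by simp
  have ident: "M' = M - A + B" unfolding A_def B_def
    by (rule multiset_eqI) simp
  have CB: "repeat_mset C B \<subseteq># Q"
  proof (rule mset_subset_eqI)
    fix x
    show "count (repeat_mset C B) x \<le> count Q x"
    proof (cases "count M x \<le> count M' x")
      case True
      then obtain d where d: "count M' x = count M x + d" using le_Suc_ex by blast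
      have "C * count M' x = C * count M x + C * d" using d by (simp add: algebra_simps)
      then show ?thesis using eqs[of x] d by (simp add: B_def)
    next
      case False then show ?thesis by (simp add: B_def)
    qed
  qed
  have Cpos: "C > 0" unfolding C_def using assms(2) by simp
  have sizeCB: "C * size B \<le> n choose 2"
    using size_mset_mono[OF CB] Q(1) by simp
  show ?thesis
  proof (cases "size B \<le> 1")
    case True
    show ?thesis
    proof (cases "size B = 0")
      case True
      then have "A = {#}" "B = {#}" using sAB by auto
      then have MM: "M' = M" using ident by simp
      have "M \<noteq> {#}" using assms(2,3) by auto
      then obtain a where a: "a \<in># M" by blast
      have "M = M - {#a#} + {#a#}" using a by simp
      then show ?thesis using MM by blast
    next
      case False
      have "size B = 1" using True False by linarith
      then have "size B = 1" "size A = 1" using sAB by auto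
      then obtain a b where "A = {#a#}" "B = {#b#}" by (metis size_1_singleton_mset)
      then show ?thesis using ident by blast
    qed
  next
    case False
    have "C * size B \<le> C * 2" using sizeCB numineq[OF assms(2)] unfolding C_def[symmetric] by linarith
    then have "size B \<le> 2" using Cpos by simp
    then have "size B = 2" using False by simp
    then have "size (repeat_mset C B) = size Q"
      using sizeCB numineq[OF assms(2)] Q(1) unfolding C_def[symmetric] by simp
    then have QB: "Q = repeat_mset C B"
      using CB by (metis mset_subset_size subset_mset.le_less not_less_iff_gr_or_eq)
    obtain y where y: "\<not> C dvd N f M y" using assms(6) C_def by blast
    have "N f M y = C * (count M y + count B y)" using Q(2) QB by (simp add: algebra_simps)
    then show ?thesis using y by simp
  qed
qed

end
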